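(* Let $a\in\mathbb R$, $b\in[a,\infty)$, $d,L\in\mathbb N$, $l=(l_0,l_1,\dots,l_L)\in\mathbb N^{L+1}$ satisfy $d\ge\sum_{k=1}^Ll_k(l_{k-1}+1)$. Then for all $\theta,\vartheta\in\mathbb R^d$, $$\sup_{x\in[a,b]^{l_0}}\|\mathscr N^{\theta,l}_{-\infty,\infty}(x)-\mathscr N^{\vartheta,l}_{-\infty,\infty}(x)\|_\infty\le\max\{1,|a|,|b|\}\,\|\theta-\vartheta\|_\infty\Bigl[\prod_{m=0}^{L-1}(l_m+1)\Bigr]\Bigl[\sum_{n=0}^{L-1}\max\{1,\|\theta\|_\infty^n\}\,\|\vartheta\|_\infty^{L-1-n}\Bigr]$$ $$\le L\max\{1,|a|,|b|\}\bigl(\max\{1,\|\theta\|_\infty,\|\vartheta\|_\infty\}\bigr)^{L-1}\Bigl[\prod_{m=0}^{L-1}(l_m+1)\Bigr]\|\theta-\vartheta\|_\infty\le L\max\{1,|a|,|b|\}(\|l\|_\infty+1)^L\bigl(\max\{1,\|\theta\|_\infty,\|\vartheta\|_\infty\}\bigr)^{L-1}\|\theta-\vartheta\|_\infty.$$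
   Context: $\|\cdot\|_\infty$ denotes the maximum norm $\|\theta\|_\infty=\max_i|\theta_i|$ on any $\mathbb R^n$ (also applied to $l$). For $r,s\in\mathbb N$, $k\in\mathbb N_0$, $\theta\in\mathbb R^d$ with $d\ge k+rs+r$, $\mathcal A^{\theta,k}_{r,s}\colon\mathbb R^s\to\mathbb R^r$ has $i$-th component $x\mapsto\sum_{j=1}^s\theta_{k+(i-1)s+j}x_j+\theta_{k+rs+i}$. $\mathfrak R_n$ applies $y\mapsto\max\{y,0\}$ componentwise on $\mathbb R^n$. With $s_k=\sum_{j=1}^kl_j(l_{j-1}+1)$, the unclipped ReLU network is $\mathscr N^{\theta,l}_{-\infty,\infty}=\mathcal A^{\theta,s_{L-1}}_{l_L,l_{L-1}}\circ\mathfrak R_{l_{L-1}}\circ\mathcal A^{\theta,s_{L-2}}_{l_{L-1},l_{L-2}}\circ\cdots\circ\mathfrak R_{l_1}\circ\mathcal A^{\theta,0}_{l_1,l_0}\colon\mathbb R^{l_0}\to\mathbb R^{l_L}$ (for $L=1$ just $\mathcal A^{\theta,0}_{l_1,l_0}$). Convention $0^0=1$. *)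

theory Defs
  imports Complex_Main
begin

text \<open>Vectors in R^n are represented as functions nat => real, with the
relevant components indexed by 1..n (as in the paper).\<close>

definition maxnorm :: "nat \<Rightarrow> (nat \<Rightarrow> real) \<Rightarrow> real" where
  "maxnorm n v = Max ((\<lambda>i. \<bar>v i\<bar>) ` {1..n})"

definition affine_map :: "(nat \<Rightarrow> real) \<Rightarrow> nat \<Rightarrow> nat \<Rightarrow> nat \<Rightarrow> (nat \<Rightarrow> real) \<Rightarrow> (nat \<Rightarrow> real)" where
  "affine_map \<theta> k r s x = (\<lambda>i. (\<Sum>j=1..s. \<theta> (k + (i - 1) * s + j) * x j) + \<theta> (k + r * s + i))"

definition relu_vec :: "(nat \<Rightarrow> real) \<Rightarrow> (nat \<Rightarrow> real)" where
  "relu_vec x = (\<lambda>i. max (x i) 0)"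

definition param_offset :: "(nat \<Rightarrow> nat) \<Rightarrow> nat \<Rightarrow> nat" where
  "param_offset l k = (\<Sum>j=1..k. l j * (l (j - 1) + 1))"

text \<open>net_layers theta l k x is the output of the first k affine layers
(with ReLU between them, none after the k-th); for k = L this is the
unclipped realization N^{theta,l}_{-inf,inf}.\<close>
fun net_layers :: "(nat \<Rightarrow> real) \<Rightarrow> (nat \<Rightarrow> nat) \<Rightarrow> nat \<Rightarrow> (nat \<Rightarrow> real) \<Rightarrow> (nat \<Rightarrow> real)" where
  "net_layers \<theta> l 0 x = x"
| "net_layers \<theta> l (Suc k) x =
     affine_map \<theta> (param_offset l k) (l (Suc k)) (l k)
       (if k = 0 then x else relu_vec (net_layers \<theta> l k x))"

definition realization :: "(nat \<Rightarrow> real) \<Rightarrow> (nat \<Rightarrow> nat) \<Rightarrow> nat \<Rightarrow> (nat \<Rightarrow> real) \<Rightarrow> (nat \<Rightarrow> real)" where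
  "realization \<theta> l L = net_layers \<theta> l L"

end

theory Submission
  imports Defs
begin

lemma maxnorm_ge: "1 \<le> i \<Longrightarrow> i \<le> n \<Longrightarrow> \<bar>v i\<bar> \<le> maxnorm n v"
  unfolding maxnorm_def by (intro Max_ge) auto

lemma maxnorm_nonneg: "1 \<le> n \<Longrightarrow> 0 \<le> maxnorm n v"
  using maxnorm_ge[of 1 n v] by linarith

lemma maxnorm_le: "1 \<le> n \<Longrightarrow> (\<And>i. 1 \<le> i \<Longrightarrow> i \<le> n \<Longrightarrow> \<bar>v i\<bar> \<le> B) \<Longrightarrow> maxnorm n v \<le> B"
  unfolding maxnorm_def by (subst Max_le_iff) auto

lemma aff_abs:
  assumes u: "\<And>j. 1 \<le> j \<Longrightarrow> j \<le> s \<Longrightarrow> \<bar>u j\<bar> \<le> B"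
  and w: "\<And>j. 1 \<le> j \<Longrightarrow> j \<le> s \<Longrightarrow> \<bar>\<theta> (k + (i - 1) * s + j)\<bar> \<le> t"
  and bb: "\<bar>\<theta> (k + r * s + i)\<bar> \<le> t" and t0: "0 \<le> t"
  shows "\<bar>affine_map \<theta> k r s u i\<bar> \<le> t * (real s * B + 1)"
proof -
  have "\<bar>\<Sum>j=1..s. \<theta> (k + (i - 1) * s + j) * u j\<bar> \<le> (\<Sum>j=1..s. \<bar>\<theta> (k + (i - 1) * s + j) * u j\<bar>)"
    by (rule sum_abs)
  also have "\<dots> \<le> (\<Sum>j=1..s. t * B)"
  proof (rule sum_mono)
    fix j assume j: "j \<in> {1..s}"
    then have "\<bar>\<theta> (k + (i - 1) * s + j)\<bar> \<le> t" "\<bar>u j\<bar> \<le> B" using w u by auto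
    then show "\<bar>\<theta> (k + (i - 1) * s + j) * u j\<bar> \<le> t * B"
      by (simp add: abs_mult t0 mult_mono)
  qed
  also have "\<dots> = t * (real s * B)" by simp
  finally have 1: "\<bar>\<Sum>j=1..s. \<theta> (k + (i - 1) * s + j) * u j\<bar> \<le> t * (real s * B)" .
  have "\<bar>affine_map \<theta> k r s u i\<bar> \<le> \<bar>\<Sum>j=1..s. \<theta> (k + (i - 1) * s + j) * u j\<bar> + \<bar>\<theta> (k + r * s + i)\<bar>"
    unfolding affine_map_def by (rule abs_triangle_ineq)
  with 1 bb show ?thesis by (simp add: algebra_simps)
qed

lemma aff_diff:
  assumes u: "\<And>j. 1 \<le> j \<Longrightarrow> j \<le> s \<Longrightarrow> \<bar>u j\<bar> \<le> B"
  and uv: "\<And>j. 1 \<le> j \<Longrightarrow> j \<le> s \<Longrightarrow> \<bar>u j - v j\<bar> \<le> D"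
  and w: "\<And>j. 1 \<le> j \<Longrightarrow> j \<le> s \<Longrightarrow> \<bar>\<theta> (k + (i - 1) * s + j) - \<phi> (k + (i - 1) * s + j)\<bar> \<le> \<delta>"
  and w2: "\<And>j. 1 \<le> j \<Longrightarrow> j \<le> s \<Longrightarrow> \<bar>\<phi> (k + (i - 1) * s + j)\<bar> \<le> t"
  and bb: "\<bar>\<theta> (k + r * s + i) - \<phi> (k + r * s + i)\<bar> \<le> \<delta>" and t0: "0 \<le> t" and d0: "0 \<le> \<delta>"
  shows "\<bar>affine_map \<theta> k r s u i - affine_map \<phi> k r s v i\<bar> \<le> \<delta> * (real s * B + 1) + t * real s * D"
proof -
  let ?w = "\<lambda>j. k + (i - 1) * s + j"
  have eq: "affine_map \<theta> k r s u i - affine_map \<phi> k r s v i =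
     (\<Sum>j=1..s. (\<theta> (?w j) - \<phi> (?w j)) * u j + \<phi> (?w j) * (u j - v j)) + (\<theta> (k + r * s + i) - \<phi> (k + r * s + i))"
  proof -
    have "(\<Sum>j=1..s. (\<theta> (?w j) - \<phi> (?w j)) * u j + \<phi> (?w j) * (u j - v j))
       = (\<Sum>j=1..s. \<theta> (?w j) * u j - \<phi> (?w j) * v j)"
      by (rule sum.cong) (simp_all add: algebra_simps)
    also have "\<dots> = (\<Sum>j=1..s. \<theta> (?w j) * u j) - (\<Sum>j=1..s. \<phi> (?w j) * v j)"
      by (rule sum_subtractf)
    finally show ?thesis unfolding affine_map_def by simp
  qed
  have "\<bar>\<Sum>j=1..s. (\<theta> (?w j) - \<phi> (?w j)) * u j + \<phi> (?w j) * (u j - v j)\<bar>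
      \<le> (\<Sum>j=1..s. \<bar>(\<theta> (?w j) - \<phi> (?w j)) * u j + \<phi> (?w j) * (u j - v j)\<bar>)"
    by (rule sum_abs)
  also have "\<dots> \<le> (\<Sum>j=1..s. \<delta> * B + t * D)"
  proof (rule sum_mono)
    fix j assume j: "j \<in> {1..s}"
    have a: "\<bar>(\<theta> (?w j) - \<phi> (?w j)) * u j\<bar> \<le> \<delta> * B"
    proof -
      have "\<bar>\<theta> (?w j) - \<phi> (?w j)\<bar> \<le> \<delta>" "\<bar>u j\<bar> \<le> B" using j w u by auto
      then show ?thesis by (simp add: abs_mult d0 mult_mono)
    qed
    have b: "\<bar>\<phi> (?w j) * (u j - v j)\<bar> \<le> t * D"
    proof -
      have "\<bar>\<phi> (?w j)\<bar> \<le> t" "\<bar>u j - v j\<bar> \<le> D" using j w2 uv by auto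
      then show ?thesis by (simp add: abs_mult t0 mult_mono)
    qed
    show "\<bar>(\<theta> (?w j) - \<phi> (?w j)) * u j + \<phi> (?w j) * (u j - v j)\<bar> \<le> \<delta> * B + t * D"
      using a b abs_triangle_ineq[of "(\<theta> (?w j) - \<phi> (?w j)) * u j" "\<phi> (?w j) * (u j - v j)"] by linarith
  qed
  also have "\<dots> = real s * (\<delta> * B + t * D)" by simp
  finally have 1: "\<bar>\<Sum>j=1..s. (\<theta> (?w j) - \<phi> (?w j)) * u j + \<phi> (?w j) * (u j - v j)\<bar> \<le> real s * (\<delta> * B + t * D)" .
  show ?thesis unfolding eq
    using 1 bb abs_triangle_ineq[of "\<Sum>j=1..s. (\<theta> (?w j) - \<phi> (?w j)) * u j + \<phi> (?w j) * (u j - v j)"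
        "\<theta> (k + r * s + i) - \<phi> (k + r * s + i)"]
    by (simp add: algebra_simps)
qed

lemma pow_max_step: "0 \<le> (t::real) \<Longrightarrow> t * max 1 (t ^ k) \<le> max 1 (t ^ Suc k)"
proof (cases "t \<le> 1")
  case True
  assume t0: "0 \<le> t"
  then have "t ^ k \<le> 1" using True by (simp add: power_le_one)
  then show ?thesis using True by simp
next
  case False
  then have "1 \<le> t ^ k" by (simp add: one_le_power)
  then show ?thesis using False by simp
qed

lemma arith_diff:
  assumes "0 \<le> (\<delta>::real)" "0 \<le> s" "1 \<le> B" "0 \<le> D"
  shows "\<delta> * (real l * B + 1) + s * real l * D \<le> (real l + 1) * (\<delta> * B + s * D)"
proof -
  have "\<delta> * 1 \<le> \<delta> * B" using assms by (intro mult_left_mono) auto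
  moreover have "0 \<le> s * D" using assms by simp
  ultimately show ?thesis by (simp add: algebra_simps)
qed

lemma arith_abs:
  assumes "0 \<le> (t::real)" "1 \<le> B"
  shows "t * (real l * B + 1) \<le> (real l + 1) * (t * B)"
proof -
  have "t * 1 \<le> t * B" using assms by (intro mult_left_mono) auto
  then show ?thesis by (simp add: algebra_simps)
qed

lemma one_le_mult2: "1 \<le> (x::real) \<Longrightarrow> 1 \<le> y \<Longrightarrow> 1 \<le> x * y"
  using mult_mono[of 1 x 1 y] by simp

lemma relu_abs: "\<bar>max (y::real) 0\<bar> \<le> \<bar>y\<bar>" by simp
lemma relu_diff: "\<bar>max (y::real) 0 - max z 0\<bar> \<le> \<bar>y - z\<bar>" by simp

theorem theorem2p36:
  fixes a b :: real and d L :: nat and l :: "nat \<Rightarrow> nat" and \<theta> \<phi> :: "nat \<Rightarrow> real"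
  assumes "a \<le> b" and "d \<ge> 1" and "L \<ge> 1"
    and "\<forall>k\<le>L. l k \<ge> 1"
    and "d \<ge> (\<Sum>k=1..L. l k * (l (k - 1) + 1))"
  shows
   "(SUP x\<in>{x. \<forall>j\<in>{1..l 0}. x j \<in> {a..b}}.
        maxnorm (l L) (\<lambda>i. realization \<theta> l L x i - realization \<phi> l L x i))
      \<le> max 1 (max \<bar>a\<bar> \<bar>b\<bar>) * maxnorm d (\<lambda>i. \<theta> i - \<phi> i)
          * (\<Prod>m\<in>{0..<L}. real (l m + 1))
          * (\<Sum>n\<in>{0..<L}. max 1 (maxnorm d \<theta> ^ n) * maxnorm d \<phi> ^ (L - 1 - n))
    \<and> max 1 (max \<bar>a\<bar> \<bar>b\<bar>) * maxnorm d (\<lambda>i. \<theta> i - \<phi> i)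
          * (\<Prod>m\<in>{0..<L}. real (l m + 1))
          * (\<Sum>n\<in>{0..<L}. max 1 (maxnorm d \<theta> ^ n) * maxnorm d \<phi> ^ (L - 1 - n))
      \<le> real L * max 1 (max \<bar>a\<bar> \<bar>b\<bar>)
          * (max 1 (max (maxnorm d \<theta>) (maxnorm d \<phi>))) ^ (L - 1)
          * (\<Prod>m\<in>{0..<L}. real (l m + 1)) * maxnorm d (\<lambda>i. \<theta> i - \<phi> i)
    \<and> real L * max 1 (max \<bar>a\<bar> \<bar>b\<bar>)
          * (max 1 (max (maxnorm d \<theta>) (maxnorm d \<phi>))) ^ (L - 1)
          * (\<Prod>m\<in>{0..<L}. real (l m + 1)) * maxnorm d (\<lambda>i. \<theta> i - \<phi> i)
      \<le> real L * max 1 (max \<bar>a\<bar> \<bar>b\<bar>) * (real (Max (l ` {0..L})) + 1) ^ L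
          * (max 1 (max (maxnorm d \<theta>) (maxnorm d \<phi>))) ^ (L - 1)
          * maxnorm d (\<lambda>i. \<theta> i - \<phi> i)"
proof -
  note assms' = assms
  define t where "t = maxnorm d \<theta>"
  define s where "s = maxnorm d \<phi>"
  define \<delta> where "\<delta> = maxnorm d (\<lambda>i. \<theta> i - \<phi> i)"
  define c where "c = max 1 (max \<bar>a\<bar> \<bar>b\<bar>)"
  define P where "P k = (\<Prod>m\<in>{0..<k}. real (l m + 1))" for k
  define S where "S k = (\<Sum>n\<in>{0..<k}. max 1 (t ^ n) * s ^ (k - 1 - n))" for k
  define inp where "inp \<psi> k x = (if k = 0 then x else relu_vec (net_layers \<psi> l k x))" for \<psi> k x
  have t0: "0 \<le> t" unfolding t_def using assms(2) by (rule maxnorm_nonneg)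
  have s0: "0 \<le> s" unfolding s_def using assms(2) by (rule maxnorm_nonneg)
  have d0: "0 \<le> \<delta>" unfolding \<delta>_def using assms(2) by (rule maxnorm_nonneg)
  have c1: "1 \<le> c" unfolding c_def by simp
  have P1: "1 \<le> P k" for k unfolding P_def by (rule prod_ge_1) auto
  have S0: "0 \<le> S k" for k unfolding S_def using s0 by (intro sum_nonneg) auto
  have PSuc: "P (Suc k) = P k * (real (l k) + 1)" for k unfolding P_def by simp
  have SSuc: "S (Suc k) = max 1 (t ^ k) + s * S k" for k
  proof -
    have "s * S k = (\<Sum>n\<in>{0..<k}. max 1 (t ^ n) * s ^ (k - n))"
      unfolding S_def sum_distrib_left
    proof (rule sum.cong)
      fix n assume "n \<in> {0..<k}"
      then have "k - n = Suc (k - 1 - n)" by auto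
      then show "s * (max 1 (t ^ n) * s ^ (k - 1 - n)) = max 1 (t ^ n) * s ^ (k - n)" by simp
    qed simp
    then show ?thesis unfolding S_def by simp
  qed
  have po_le: "param_offset l k \<le> d" if "k \<le> L" for k
  proof -
    have "param_offset l k \<le> param_offset l L"
      unfolding param_offset_def using that by (intro sum_mono2) auto
    then show ?thesis using assms(5) unfolding param_offset_def by simp
  qed
  have poSuc: "param_offset l (Suc k) = param_offset l k + l (Suc k) * (l k + 1)" for k
    unfolding param_offset_def by simp
  have idx1: "1 \<le> param_offset l k + (i - 1) * l k + j \<and> param_offset l k + (i - 1) * l k + j \<le> d"
    if "k < L" "1 \<le> i" "i \<le> l (Suc k)" "1 \<le> j" "j \<le> l k" for k i j
  proof -
    have "(i - 1) * l k + j \<le> (i - 1) * l k + l k" using that by simp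
    also have "\<dots> = i * l k" using that(2) by (cases i) auto
    also have "\<dots> \<le> l (Suc k) * (l k + 1)" using that(3) by (intro mult_mono) auto
    finally show ?thesis using po_le[of "Suc k"] that poSuc[of k] by simp
  qed
  have idx2: "1 \<le> param_offset l k + l (Suc k) * l k + i \<and> param_offset l k + l (Suc k) * l k + i \<le> d"
    if "k < L" "1 \<le> i" "i \<le> l (Suc k)" for k i
    using po_le[of "Suc k"] that poSuc[of k] by (simp add: algebra_simps)
  have step: "\<bar>net_layers \<theta> l (Suc k) x i\<bar> \<le> t * (real (l k) * B + 1) \<and>
      \<bar>net_layers \<theta> l (Suc k) x i - net_layers \<phi> l (Suc k) x i\<bar> \<le> \<delta> * (real (l k) * B + 1) + s * real (l k) * D"
    if k: "k < L" and hB: "\<And>j. 1 \<le> j \<Longrightarrow> j \<le> l k \<Longrightarrow> \<bar>inp \<theta> k x j\<bar> \<le> B"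
      and hD: "\<And>j. 1 \<le> j \<Longrightarrow> j \<le> l k \<Longrightarrow> \<bar>inp \<theta> k x j - inp \<phi> k x j\<bar> \<le> D"
      and i: "1 \<le> i" "i \<le> l (Suc k)" for k x B D i
  proof -
    have nl: "net_layers \<psi> l (Suc k) x = affine_map \<psi> (param_offset l k) (l (Suc k)) (l k) (inp \<psi> k x)" for \<psi>
      by (simp add: inp_def)
    show ?thesis unfolding nl
    proof
      show "\<bar>affine_map \<theta> (param_offset l k) (l (Suc k)) (l k) (inp \<theta> k x) i\<bar> \<le> t * (real (l k) * B + 1)"
      proof (rule aff_abs[OF hB _ _ t0])
        fix j assume "1 \<le> j" "j \<le> l k"
        then show "\<bar>\<theta> (param_offset l k + (i - 1) * l k + j)\<bar> \<le> t"
          using idx1[OF k i, of j] unfolding t_def by (intro maxnorm_ge) auto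
      next
        show "\<bar>\<theta> (param_offset l k + l (Suc k) * l k + i)\<bar> \<le> t"
          using idx2[OF k i] unfolding t_def by (intro maxnorm_ge) auto
      qed
      show "\<bar>affine_map \<theta> (param_offset l k) (l (Suc k)) (l k) (inp \<theta> k x) i -
           affine_map \<phi> (param_offset l k) (l (Suc k)) (l k) (inp \<phi> k x) i\<bar>
          \<le> \<delta> * (real (l k) * B + 1) + s * real (l k) * D"
      proof (rule aff_diff[OF hB hD _ _ _ s0 d0])
        fix j assume "1 \<le> j" "j \<le> l k"
        then show "\<bar>\<theta> (param_offset l k + (i - 1) * l k + j) - \<phi> (param_offset l k + (i - 1) * l k + j)\<bar> \<le> \<delta>"
          using idx1[OF k i, of j] unfolding \<delta>_def
          by (intro maxnorm_ge[where v="\<lambda>i. \<theta> i - \<phi> i", simplified]) auto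
      next
        fix j assume "1 \<le> j" "j \<le> l k"
        then show "\<bar>\<phi> (param_offset l k + (i - 1) * l k + j)\<bar> \<le> s"
          using idx1[OF k i, of j] unfolding s_def by (intro maxnorm_ge) auto
      next
        show "\<bar>\<theta> (param_offset l k + l (Suc k) * l k + i) - \<phi> (param_offset l k + l (Suc k) * l k + i)\<bar> \<le> \<delta>"
          using idx2[OF k i] unfolding \<delta>_def
          by (intro maxnorm_ge[where v="\<lambda>i. \<theta> i - \<phi> i", simplified]) auto
      qed
    qed
  qed
  have ind: "k \<le> L \<longrightarrow> (\<forall>j. 1 \<le> j \<and> j \<le> l k \<longrightarrow> \<bar>inp \<theta> k x j\<bar> \<le> c * P k * max 1 (t ^ k)) \<and>
       (\<forall>j. 1 \<le> j \<and> j \<le> l k \<longrightarrow> \<bar>inp \<theta> k x j - inp \<phi> k x j\<bar> \<le> c * \<delta> * P k * S k)"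
    if x: "x \<in> {x. \<forall>j\<in>{1..l 0}. x j \<in> {a..b}}" for k x
  proof (induction k)
    case 0
    have "\<bar>x j\<bar> \<le> c" if "1 \<le> j" "j \<le> l 0" for j
    proof -
      have "a \<le> x j" "x j \<le> b" using x that by auto
      then show ?thesis unfolding c_def by linarith
    qed
    then show ?case by (simp add: inp_def P_def S_def)
  next
    case (Suc k)
    show ?case
    proof
      assume kL: "Suc k \<le> L"
      with Suc have hB: "\<And>j. 1 \<le> j \<Longrightarrow> j \<le> l k \<Longrightarrow> \<bar>inp \<theta> k x j\<bar> \<le> c * P k * max 1 (t ^ k)"
        and hD: "\<And>j. 1 \<le> j \<Longrightarrow> j \<le> l k \<Longrightarrow> \<bar>inp \<theta> k x j - inp \<phi> k x j\<bar> \<le> c * \<delta> * P k * S k" by auto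
      have B1: "1 \<le> c * P k * max 1 (t ^ k)"
        using one_le_mult2[OF one_le_mult2[OF c1 P1[of k]], of "max 1 (t ^ k)"] by simp
      have D0: "0 \<le> c * \<delta> * P k * S k" using c1 d0 P1[of k] S0[of k] by simp
      have inpS: "inp \<psi> (Suc k) x = relu_vec (net_layers \<psi> l (Suc k) x)" for \<psi> by (simp add: inp_def)
      show "(\<forall>j. 1 \<le> j \<and> j \<le> l (Suc k) \<longrightarrow> \<bar>inp \<theta> (Suc k) x j\<bar> \<le> c * P (Suc k) * max 1 (t ^ Suc k)) \<and>
       (\<forall>j. 1 \<le> j \<and> j \<le> l (Suc k) \<longrightarrow> \<bar>inp \<theta> (Suc k) x j - inp \<phi> (Suc k) x j\<bar> \<le> c * \<delta> * P (Suc k) * S (Suc k))"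
      proof (intro conjI allI impI; elim conjE)
        fix j assume j: "1 \<le> j" "j \<le> l (Suc k)"
        note st = step[OF _ hB hD j]
        have "\<bar>inp \<theta> (Suc k) x j\<bar> \<le> \<bar>net_layers \<theta> l (Suc k) x j\<bar>"
          unfolding inpS relu_vec_def by simp
        also have "\<dots> \<le> t * (real (l k) * (c * P k * max 1 (t ^ k)) + 1)" using st kL by simp
        also have "\<dots> \<le> (real (l k) + 1) * (t * (c * P k * max 1 (t ^ k)))" by (rule arith_abs[OF t0 B1])
        also have "\<dots> = c * P (Suc k) * (t * max 1 (t ^ k))" unfolding PSuc by (simp add: algebra_simps)
        also have "\<dots> \<le> c * P (Suc k) * max 1 (t ^ Suc k)"
          using c1 P1[of "Suc k"] pow_max_step[OF t0, of k] by (intro mult_left_mono) auto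
        finally show "\<bar>inp \<theta> (Suc k) x j\<bar> \<le> c * P (Suc k) * max 1 (t ^ Suc k)" .
      next
        fix j assume j: "1 \<le> j" "j \<le> l (Suc k)"
        note st = step[OF _ hB hD j]
        have "\<bar>inp \<theta> (Suc k) x j - inp \<phi> (Suc k) x j\<bar> \<le> \<bar>net_layers \<theta> l (Suc k) x j - net_layers \<phi> l (Suc k) x j\<bar>"
          unfolding inpS relu_vec_def by (rule relu_diff)
        also have "\<dots> \<le> \<delta> * (real (l k) * (c * P k * max 1 (t ^ k)) + 1) + s * real (l k) * (c * \<delta> * P k * S k)"
          using st kL by simp
        also have "\<dots> \<le> (real (l k) + 1) * (\<delta> * (c * P k * max 1 (t ^ k)) + s * (c * \<delta> * P k * S k))"
          by (rule arith_diff[OF d0 s0 B1 D0])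
        also have "\<dots> = c * \<delta> * P (Suc k) * S (Suc k)" unfolding PSuc SSuc by (simp add: algebra_simps)
        finally show "\<bar>inp \<theta> (Suc k) x j - inp \<phi> (Suc k) x j\<bar> \<le> c * \<delta> * P (Suc k) * S (Suc k)" .
      qed
    qed
  qed
  have part1: "(SUP x\<in>{x. \<forall>j\<in>{1..l 0}. x j \<in> {a..b}}.
        maxnorm (l L) (\<lambda>i. realization \<theta> l L x i - realization \<phi> l L x i)) \<le> c * \<delta> * P L * S L"
  proof (rule cSUP_least)
    show "{x. \<forall>j\<in>{1..l 0}. x j \<in> {a..b}} \<noteq> {}" using assms(1) by auto
  next
    fix x assume x: "x \<in> {x. \<forall>j\<in>{1..l 0}. x j \<in> {a..b}}"
    obtain k where Lk: "L = Suc k" using assms(3) by (cases L) auto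
    have kL: "k < L" "k \<le> L" using Lk by auto
    have B1: "1 \<le> c * P k * max 1 (t ^ k)"
      using one_le_mult2[OF one_le_mult2[OF c1 P1[of k]], of "max 1 (t ^ k)"] by simp
    have D0: "0 \<le> c * \<delta> * P k * S k" using c1 d0 P1[of k] S0[of k] by simp
    have lL: "1 \<le> l L" using assms(4) by auto
    show "maxnorm (l L) (\<lambda>i. realization \<theta> l L x i - realization \<phi> l L x i) \<le> c * \<delta> * P L * S L"
    proof (rule maxnorm_le[OF lL])
      fix i assume i: "1 \<le> i" "i \<le> l L"
      note st = step[where k=k and B="c * P k * max 1 (t ^ k)" and x=x and D="c * \<delta> * P k * S k" and i=i]
      have "\<bar>realization \<theta> l L x i - realization \<phi> l L x i\<bar>
          \<le> \<delta> * (real (l k) * (c * P k * max 1 (t ^ k)) + 1) + s * real (l k) * (c * \<delta> * P k * S k)"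
        unfolding realization_def Lk using st kL ind[OF x, of k] i Lk by auto
      also have "\<dots> \<le> (real (l k) + 1) * (\<delta> * (c * P k * max 1 (t ^ k)) + s * (c * \<delta> * P k * S k))"
        by (rule arith_diff[OF d0 s0 B1 D0])
      also have "\<dots> = c * \<delta> * P L * S L" unfolding Lk PSuc SSuc by (simp add: algebra_simps)
      finally show "\<bar>realization \<theta> l L x i - realization \<phi> l L x i\<bar> \<le> c * \<delta> * P L * S L" .
    qed
  qed
  define U where "U = max 1 (max t s)"
  have U1: "1 \<le> U" unfolding U_def by simp
  have SL: "S L \<le> real L * U ^ (L - 1)"
  proof -
    have "S L \<le> (\<Sum>n\<in>{0..<L}. U ^ (L - 1))"
      unfolding S_def
    proof (rule sum_mono)
      fix n assume n: "n \<in> {0..<L}"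
      have "max 1 (t ^ n) \<le> U ^ n"
        using U1 t0 by (auto simp: U_def one_le_power intro!: power_mono)
      moreover have "s ^ (L - 1 - n) \<le> U ^ (L - 1 - n)"
        using s0 by (auto simp: U_def intro!: power_mono)
      ultimately have "max 1 (t ^ n) * s ^ (L - 1 - n) \<le> U ^ n * U ^ (L - 1 - n)"
        using s0 by (intro mult_mono) auto
      also have "\<dots> = U ^ (L - 1)" using n by (simp add: power_add[symmetric])
      finally show "max 1 (t ^ n) * s ^ (L - 1 - n) \<le> U ^ (L - 1)" .
    qed
    then show ?thesis by simp
  qed
  have part2: "c * \<delta> * P L * S L \<le> real L * c * U ^ (L - 1) * P L * \<delta>"
  proof -
    have "c * \<delta> * P L * S L \<le> c * \<delta> * P L * (real L * U ^ (L - 1))"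
      using SL c1 d0 P1[of L] by (intro mult_left_mono) auto
    then show ?thesis by (simp add: algebra_simps)
  qed
  define M where "M = Max (l ` {0..L})"
  have PL: "P L \<le> (real M + 1) ^ L"
  proof -
    have "P L \<le> (\<Prod>m\<in>{0..<L}. real M + 1)"
      unfolding P_def
    proof (rule prod_mono)
      fix m assume "m \<in> {0..<L}"
      then have "l m \<le> M" unfolding M_def by (intro Max_ge) auto
      then show "0 \<le> real (l m + 1) \<and> real (l m + 1) \<le> real M + 1" by simp
    qed
    then show ?thesis by simp
  qed
  have part3: "real L * c * U ^ (L - 1) * P L * \<delta> \<le> real L * c * (real M + 1) ^ L * U ^ (L - 1) * \<delta>"
  proof -
    have "0 \<le> real L * c * U ^ (L - 1) * \<delta>" using c1 U1 d0 by simp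
    then have "(real L * c * U ^ (L - 1) * \<delta>) * P L \<le> (real L * c * U ^ (L - 1) * \<delta>) * (real M + 1) ^ L"
      using PL by (intro mult_left_mono) auto
    then show ?thesis by (simp add: algebra_simps)
  qed
  show ?thesis
    using part1 part2 part3
    unfolding t_def s_def \<delta>_def c_def P_def S_def U_def M_def by blast
qed

end
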